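(* Let $n_1,n_2,n_3$ be integers with $3\le n_1,n_2\le n_3$ and $3\max(n_1,n_2)\le 2n_3\le n_1n_2$. For every set $W$ produced by the Middle Cone Construction described below, the landmark graph $\mathcal{G}(W)$ contains no bad $4$-cycle.
   Context: For a vertex set $W$ of $K_{n_1}\times K_{n_2}\times K_{n_3}$ (vertices are triples $(x_1,x_2,x_3)$, $1\le x_i\le n_i$), $W_{i,a}=\{w\in W:w_i=a\}$; the landmark graph $\mathcal{G}(W)$ is the hypergraph on $W$ whose hyperedges are the nonempty $W_{i,a}$, colored $i$. Bad $4$-cycle: distinct $w_1,\dots,w_4\in W$ and $\{i,j,k\}=\{1,2,3\}$ such that $\{w_1,w_2\}$ and $\{w_3,w_4\}$ are hyperedges of color $i$, $w_2,w_3$ lie in a common hyperedge of color $j$, and $w_4,w_1$ lie in a common hyperedge of color $k$. Multiplicities: write $n_3=qn_1+r$, $0\le r\le n_1-1$. If $r\le n_1-r$, $(\ell_1,\dots,\ell_{n_1})$ is $(q+1,q)$ repeated $r$ times followed by $n_1-2r$ copies of $q$; if $r>n_1-r$, it is $(q+1,q)$ repeated $n_1-r$ times followed by $2r-n_1$ copies of $q+1$. Let $L_i=\sum_{j<i}\ell_j$; block $i$ is the set of columns $c$ with $L_i<c\le L_i+\ell_i$; $s_i=L_i+1$. Middle Cone Construction: $W=W^L\cup W^R$, each consisting of $n_3$ landmarks indexed by columns $c=1,\dots,n_3$. Left column $c$ in block $i$ is $(i,y^L_c,c)$; right column $c$ in block $i$ is $(i+1,y^R_c,c)$ with $n_1+1$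 read as $1$. Even $n_2$, $h=n_2/2$: $y^L_c=((c-1)\bmod h)+1$, $y^R_c=h+((c-1)\bmod h)+1$. Odd $n_2$, $f=(n_2-1)/2$, $k=\#\{i:\ell_i>f\}$: let $S=\{s_i:\ell_i>f\}$ if $k\ge2$ and $S=\{1\}$ if $k\le1$. Set $y^L_c=n_2$ for $c\in S$ and fill the other left columns in increasing order with $1,\dots,f,1,\dots,f,\dots$; set $y^R_c=n_2$ for $c\in S+1$ and fill the other right columns in increasing order with $f+1,\dots,2f,f+1,\dots,2f,\dots$. If $k\le1$, additionally change one left landmark of the form $(x,1,z)$ with $x\notin\{1,2,n_1\}$ to $(x,n_2,z)$ (any such choice). *)

theory Defs
  imports Main
begin

type_synonym vertex = "nat \<times> nat \<times> nat"

definition coord :: "nat \<Rightarrow> vertex \<Rightarrow> nat" where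
  "coord i w = (if i = 1 then fst w else if i = 2 then fst (snd w) else snd (snd w))"

definition Wsec :: "vertex set \<Rightarrow> nat \<Rightarrow> nat \<Rightarrow> vertex set" where
  "Wsec W i a = {w \<in> W. coord i w = a}"

text \<open>Colored hyperedges of the landmark graph: pairs (color, hyperedge).\<close>
definition hyperedges :: "vertex set \<Rightarrow> (nat \<times> vertex set) set" where
  "hyperedges W = {(i, Wsec W i a) | i a. i \<in> {1,2,3} \<and> Wsec W i a \<noteq> {}}"

definition has_bad_4cycle :: "vertex set \<Rightarrow> bool" where
  "has_bad_4cycle W \<longleftrightarrow>
     (\<exists>w1 w2 w3 w4 i j k.
        w1 \<in> W \<and> w2 \<in> W \<and> w3 \<in> W \<and> w4 \<in> W \<and>
        distinct [w1, w2, w3, w4] \<and>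
        {i, j, k} = {1, 2, 3::nat} \<and>
        (i, {w1, w2}) \<in> hyperedges W \<and> (i, {w3, w4}) \<in> hyperedges W \<and>
        (\<exists>e. (j, e) \<in> hyperedges W \<and> w2 \<in> e \<and> w3 \<in> e) \<and>
        (\<exists>e. (k, e) \<in> hyperedges W \<and> w4 \<in> e \<and> w1 \<in> e))"

definition ell :: "nat \<Rightarrow> nat \<Rightarrow> nat \<Rightarrow> nat" where
  "ell n1 n3 j =
     (let q = n3 div n1; r = n3 mod n1 in
      if r \<le> n1 - r then (if j \<le> 2 * r \<and> odd j then q + 1 else q)
      else (if j \<le> 2 * (n1 - r) then (if odd j then q + 1 else q) else q + 1))"

definition Lsum :: "nat \<Rightarrow> nat \<Rightarrow> nat \<Rightarrow> nat" where
  "Lsum n1 n3 i = (\<Sum>j\<in>{1..<i}. ell n1 n3 j)"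

definition sfirst :: "nat \<Rightarrow> nat \<Rightarrow> nat \<Rightarrow> nat" where
  "sfirst n1 n3 i = Lsum n1 n3 i + 1"

definition in_block :: "nat \<Rightarrow> nat \<Rightarrow> nat \<Rightarrow> nat \<Rightarrow> bool" where
  "in_block n1 n3 i c \<longleftrightarrow> Lsum n1 n3 i < c \<and> c \<le> Lsum n1 n3 i + ell n1 n3 i"

definition left_set :: "nat \<Rightarrow> nat \<Rightarrow> (nat \<Rightarrow> nat) \<Rightarrow> vertex set" where
  "left_set n1 n3 yL = {(i, yL c, c) | i c. 1 \<le> i \<and> i \<le> n1 \<and> 1 \<le> c \<and> c \<le> n3 \<and> in_block n1 n3 i c}"

definition right_set :: "nat \<Rightarrow> nat \<Rightarrow> (nat \<Rightarrow> nat) \<Rightarrow> vertex set" where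
  "right_set n1 n3 yR = {(if i = n1 then 1 else i + 1, yR c, c) | i c.
      1 \<le> i \<and> i \<le> n1 \<and> 1 \<le> c \<and> c \<le> n3 \<and> in_block n1 n3 i c}"

definition yL_even :: "nat \<Rightarrow> nat \<Rightarrow> nat" where
  "yL_even n2 c = ((c - 1) mod (n2 div 2)) + 1"

definition yR_even :: "nat \<Rightarrow> nat \<Rightarrow> nat" where
  "yR_even n2 c = n2 div 2 + ((c - 1) mod (n2 div 2)) + 1"

definition fpar :: "nat \<Rightarrow> nat" where "fpar n2 = (n2 - 1) div 2"

definition kcount :: "nat \<Rightarrow> nat \<Rightarrow> nat \<Rightarrow> nat" where
  "kcount n1 n2 n3 = card {i \<in> {1..n1}. ell n1 n3 i > fpar n2}"

definition Sset :: "nat \<Rightarrow> nat \<Rightarrow> nat \<Rightarrow> nat set" where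
  "Sset n1 n2 n3 = (if kcount n1 n2 n3 \<ge> 2
      then {sfirst n1 n3 i | i. i \<in> {1..n1} \<and> ell n1 n3 i > fpar n2} else {1})"

text \<open>Non-special columns (those not in T) are filled in increasing order with
  base+1, ..., base+f, base+1, ...: the m-th such column gets base + ((m-1) mod f) + 1.\<close>
definition fill_odd :: "nat \<Rightarrow> nat set \<Rightarrow> nat \<Rightarrow> nat \<Rightarrow> nat" where
  "fill_odd n2 T base c =
     (if c \<in> T then n2
      else base + ((card {c' \<in> {1..c}. c' \<notin> T} - 1) mod fpar n2) + 1)"

definition yL_odd :: "nat \<Rightarrow> nat \<Rightarrow> nat \<Rightarrow> nat \<Rightarrow> nat" where
  "yL_odd n1 n2 n3 c = fill_odd n2 (Sset n1 n2 n3) 0 c"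

definition yR_odd :: "nat \<Rightarrow> nat \<Rightarrow> nat \<Rightarrow> nat \<Rightarrow> nat" where
  "yR_odd n1 n2 n3 c = fill_odd n2 ((\<lambda>s. s + 1) ` Sset n1 n2 n3) (fpar n2) c"

text \<open>All sets W produced by the Middle Cone Construction (several if a choice is made).\<close>
definition middle_cone :: "nat \<Rightarrow> nat \<Rightarrow> nat \<Rightarrow> vertex set set" where
  "middle_cone n1 n2 n3 =
     (if even n2 then {left_set n1 n3 (yL_even n2) \<union> right_set n1 n3 (yR_even n2)}
      else if kcount n1 n2 n3 \<ge> 2 then
        {left_set n1 n3 (yL_odd n1 n2 n3) \<union> right_set n1 n3 (yR_odd n1 n2 n3)}
      else
        {insert (x, n2, z) (left_set n1 n3 (yL_odd n1 n2 n3) - {(x, 1, z)})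
           \<union> right_set n1 n3 (yR_odd n1 n2 n3) | x z.
           (x, 1, z) \<in> left_set n1 n3 (yL_odd n1 n2 n3) \<and> x \<notin> {1, 2, n1}})"

end

theory Submission
  imports Defs
begin

lemma ell_bounds:
  "n3 div n1 \<le> ell n1 n3 j \<and> ell n1 n3 j \<le> n3 div n1 + 1"
  unfolding ell_def Let_def by auto

lemma Lsum_1[simp]: "Lsum n1 n3 1 = 0"
  unfolding Lsum_def by simp

lemma Lsum_Suc0[simp]: "Lsum n1 n3 (Suc 0) = 0"
  unfolding Lsum_def by simp

lemma Lsum_Suc: "1 \<le> i \<Longrightarrow> Lsum n1 n3 (Suc i) = Lsum n1 n3 i + ell n1 n3 i"
proof -
  assume "1 \<le> i"
  then have "{1..<Suc i} = insert i {1..<i}" by auto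
  then show ?thesis unfolding Lsum_def by simp
qed

lemma Lsum_mono: "i \<le> j \<Longrightarrow> Lsum n1 n3 i \<le> Lsum n1 n3 j"
  unfolding Lsum_def by (rule sum_mono2) auto

definition Eext :: "nat \<Rightarrow> nat \<Rightarrow> nat \<Rightarrow> nat" where
  "Eext n1 r i = (if r \<le> n1 - r then min (i div 2) r
     else (if i \<le> 2 * (n1 - r) + 1 then i div 2 else (n1 - r) + (i - 1 - 2 * (n1 - r))))"

lemma Eext_step:
  "Eext n1 r (Suc (Suc i)) = Eext n1 r (Suc i) +
     (if r \<le> n1 - r then (if Suc i \<le> 2 * r \<and> odd (Suc i) then 1 else 0)
      else (if Suc i \<le> 2 * (n1 - r) then (if odd (Suc i) then 1 else 0) else 1))"
proof -
  obtain t where t: "Suc i = 2 * t \<or> Suc i = 2 * t + 1"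
    by (metis dvd_mult_div_cancel odd_two_times_div_two_succ)
  show ?thesis
  proof (cases "Suc i = 2 * t")
    case True
    then have a: "Suc i div 2 = t" "Suc (Suc i) div 2 = t" "\<not> odd (Suc i)" by auto
    show ?thesis unfolding Eext_def using a True by auto
  next
    case False
    then have b: "Suc i = 2 * t + 1" using t by simp
    then have a: "Suc i div 2 = t" "Suc (Suc i) div 2 = t + 1" "odd (Suc i)" by auto
    show ?thesis unfolding Eext_def using a b by auto
  qed
qed

lemma ell_eq:
  "ell n1 n3 j = n3 div n1 +
     (if n3 mod n1 \<le> n1 - n3 mod n1 then (if j \<le> 2 * (n3 mod n1) \<and> odd j then 1 else 0)
      else (if j \<le> 2 * (n1 - n3 mod n1) then (if odd j then 1 else 0) else 1))"
  unfolding ell_def Let_def by auto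

lemma Lsum_closed:
  "Lsum n1 n3 (Suc i) = (n3 div n1) * i + Eext n1 (n3 mod n1) (Suc i)"
proof (induction i)
  case 0
  then show ?case by (simp add: Eext_def Lsum_def)
next
  case (Suc i)
  have "Lsum n1 n3 (Suc (Suc i)) = Lsum n1 n3 (Suc i) + ell n1 n3 (Suc i)"
    by (rule Lsum_Suc) simp
  also have "\<dots> = (n3 div n1) * i + Eext n1 (n3 mod n1) (Suc i) + ell n1 n3 (Suc i)"
    using Suc by simp
  also have "\<dots> = (n3 div n1) * Suc i + Eext n1 (n3 mod n1) (Suc (Suc i))"
    using Eext_step[of n1 "n3 mod n1" i] ell_eq[of n1 n3 "Suc i"] by simp
  finally show ?case .
qed

lemma Eext_total:
  assumes "r < n1" shows "Eext n1 r (Suc n1) = r"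
proof (cases "r \<le> n1 - r")
  case True
  then have "r \<le> Suc n1 div 2" by linarith
  then show ?thesis using True unfolding Eext_def by simp
next
  case False
  then have "\<not> Suc n1 \<le> 2 * (n1 - r) + 1" using assms by linarith
  moreover have "n1 - r + (Suc n1 - 1 - 2 * (n1 - r)) = r" using False assms by linarith
  ultimately show ?thesis using False unfolding Eext_def by simp
qed

lemma Lsum_total:
  assumes "1 \<le> n1"
  shows "Lsum n1 n3 (Suc n1) = n3"
proof -
  have r: "n3 mod n1 < n1" using assms by simp
  have "Eext n1 (n3 mod n1) (Suc n1) = n3 mod n1"
    using r by (rule Eext_total)
  then show ?thesis using Lsum_closed[of n1 n3 n1]
    by (simp add: mult.commute)
qed

definition nxt :: "nat \<Rightarrow> nat \<Rightarrow> nat" where "nxt n1 i = (if i = n1 then 1 else Suc i)"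
definition prv :: "nat \<Rightarrow> nat \<Rightarrow> nat" where "prv n1 i = (if i = 1 then n1 else i - 1)"
definition blk :: "nat \<Rightarrow> nat \<Rightarrow> nat \<Rightarrow> nat" where
  "blk n1 n3 c = (THE i. 1 \<le> i \<and> i \<le> n1 \<and> in_block n1 n3 i c)"

lemma block_exists_aux:
  "0 < c \<Longrightarrow> c \<le> Lsum n1 n3 (Suc m) \<Longrightarrow> \<exists>i. 1 \<le> i \<and> i \<le> m \<and> in_block n1 n3 i c"
proof (induction m)
  case 0
  then show ?case by simp
next
  case (Suc m)
  show ?case
  proof (cases "c \<le> Lsum n1 n3 (Suc m)")
    case True
    then show ?thesis using Suc by (meson le_SucI)
  next
    case False
    then show ?thesis using Suc.prems Lsum_Suc[of "Suc m" n1 n3] unfolding in_block_def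
      by (intro exI[of _ "Suc m"]) auto
  qed
qed

locale mc =
  fixes n1 n2 n3 :: nat
  assumes a1: "3 \<le> n1" and a2: "3 \<le> n2" and a3: "n1 \<le> n3" and a4: "n2 \<le> n3"
    and a5: "3 * max n1 n2 \<le> 2 * n3" and a6: "2 * n3 \<le> n1 * n2"
begin

abbreviation "q \<equiv> n3 div n1"
abbreviation "r \<equiv> n3 mod n1"
abbreviation "el \<equiv> ell n1 n3"
abbreviation "LS \<equiv> Lsum n1 n3"
abbreviation "sf \<equiv> sfirst n1 n3"
abbreviation "inb \<equiv> in_block n1 n3"
abbreviation "bk \<equiv> blk n1 n3"

lemma n3_eq: "n3 = n1 * q + r" by simp

lemma r_lt: "r < n1" using a1 by simp

lemma q_ge1: "1 \<le> q"
proof -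
  have "n1 div n1 \<le> n3 div n1" using a3 by (rule div_le_mono)
  then show ?thesis using a1 by simp
qed

lemma el_bounds: "q \<le> el j" "el j \<le> q + 1"
  using ell_bounds[of n3 n1 j] by auto

lemma el_pos: "1 \<le> el j" using q_ge1 el_bounds(1)[of j] by linarith

lemma LS_total: "LS (Suc n1) = n3" using a1 Lsum_total[of n1 n3] by simp

lemma LS_step: "1 \<le> i \<Longrightarrow> LS (Suc i) = LS i + el i" by (rule Lsum_Suc)

lemma inb_range:
  assumes "1 \<le> i" "i \<le> n1" "inb i c" shows "1 \<le> c" "c \<le> n3"
proof -
  show "1 \<le> c" using assms(3) unfolding in_block_def by simp
  have "LS (Suc i) \<le> LS (Suc n1)" using assms by (intro Lsum_mono) simp
  then show "c \<le> n3" using assms LS_step[of i] LS_total unfolding in_block_def by simp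
qed

lemma inb_unique:
  assumes "1 \<le> i" "i \<le> n1" "inb i c" "1 \<le> j" "j \<le> n1" "inb j c" shows "i = j"
proof (rule ccontr)
  assume "i \<noteq> j"
  have *: "False" if "1 \<le> a" "a < b" "inb a c" "inb b c" for a b
  proof -
    have "LS (Suc a) \<le> LS b" using that by (intro Lsum_mono) simp
    then show False using that LS_step[of a] unfolding in_block_def by simp
  qed
  show False
    using *[of i j] *[of j i] assms \<open>i \<noteq> j\<close> by (cases "i < j") auto
qed

lemma inb_exists:
  assumes "1 \<le> c" "c \<le> n3" shows "\<exists>i. 1 \<le> i \<and> i \<le> n1 \<and> inb i c"
  using block_exists_aux[of c n1 n3 n1] assms LS_total by simp

lemma blk_eq: assumes "1 \<le> i" "i \<le> n1" "inb i c" shows "bk c = i"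
  unfolding blk_def using assms inb_unique by blast

lemma blk_props: assumes "1 \<le> c" "c \<le> n3"
  shows "1 \<le> bk c" "bk c \<le> n1" "inb (bk c) c"
  using inb_exists[OF assms] blk_eq by metis+

lemma sf_in: "1 \<le> i \<Longrightarrow> inb i (sf i)"
  unfolding sfirst_def in_block_def using el_pos[of i] by simp

lemma sf2_in: "2 \<le> el i \<Longrightarrow> inb i (Suc (sf i))"
  unfolding sfirst_def in_block_def by simp

lemma left_eq: "left_set n1 n3 yL = (\<lambda>c. (bk c, yL c, c)) ` {1..n3}"
proof -
  have e: "left_set n1 n3 yL = {(i, yL c, c) | i c. 1 \<le> i \<and> i \<le> n1 \<and> 1 \<le> c \<and> c \<le> n3 \<and> inb i c}"
    unfolding left_set_def by simp
  have "left_set n1 n3 yL \<subseteq> (\<lambda>c. (bk c, yL c, c)) ` {1..n3}"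
  proof
    fix x assume "x \<in> left_set n1 n3 yL"
    then obtain i c where x: "x = (i, yL c, c)" "1 \<le> i" "i \<le> n1" "1 \<le> c" "c \<le> n3" "inb i c"
      unfolding e by blast
    then have "bk c = i" using blk_eq by blast
    then show "x \<in> (\<lambda>c. (bk c, yL c, c)) ` {1..n3}" using x by auto
  qed
  moreover have "(\<lambda>c. (bk c, yL c, c)) ` {1..n3} \<subseteq> left_set n1 n3 yL"
  proof
    fix x assume "x \<in> (\<lambda>c. (bk c, yL c, c)) ` {1..n3}"
    then obtain c where c: "x = (bk c, yL c, c)" "1 \<le> c" "c \<le> n3" by auto
    show "x \<in> left_set n1 n3 yL" unfolding e using c blk_props[OF c(2,3)] by blast
  qed
  ultimately show ?thesis by blast
qed

lemma right_eq: "right_set n1 n3 yR = (\<lambda>c. (nxt n1 (bk c), yR c, c)) ` {1..n3}"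
proof -
  have e: "right_set n1 n3 yR = {(nxt n1 i, yR c, c) | i c. 1 \<le> i \<and> i \<le> n1 \<and> 1 \<le> c \<and> c \<le> n3 \<and> inb i c}"
    unfolding right_set_def nxt_def by simp
  have "right_set n1 n3 yR \<subseteq> (\<lambda>c. (nxt n1 (bk c), yR c, c)) ` {1..n3}"
  proof
    fix x assume "x \<in> right_set n1 n3 yR"
    then obtain i c where x: "x = (nxt n1 i, yR c, c)" "1 \<le> i" "i \<le> n1" "1 \<le> c" "c \<le> n3" "inb i c"
      unfolding e by blast
    then have "bk c = i" using blk_eq by blast
    then show "x \<in> (\<lambda>c. (nxt n1 (bk c), yR c, c)) ` {1..n3}" using x by auto
  qed
  moreover have "(\<lambda>c. (nxt n1 (bk c), yR c, c)) ` {1..n3} \<subseteq> right_set n1 n3 yR"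
  proof
    fix x assume "x \<in> (\<lambda>c. (nxt n1 (bk c), yR c, c)) ` {1..n3}"
    then obtain c where c: "x = (nxt n1 (bk c), yR c, c)" "1 \<le> c" "c \<le> n3" by auto
    show "x \<in> right_set n1 n3 yR" unfolding e using c blk_props[OF c(2,3)] by blast
  qed
  ultimately show ?thesis by blast
qed

lemma el_1: "2 \<le> el 1"
proof (cases "r = 0")
  case True
  then have "n3 = n1 * q" using n3_eq by simp
  then have "3 * n1 \<le> 2 * (n1 * q)" using a5 by simp
  then have "3 * n1 \<le> n1 * (2 * q)" by simp
  have "3 \<le> 2 * q"
  proof (rule ccontr)
    assume "\<not> 3 \<le> 2 * q"
    then have "2 * q \<le> 2" by simp
    then have "n1 * (2 * q) \<le> n1 * 2" by (rule mult_le_mono2)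
    then show False using \<open>3 * n1 \<le> n1 * (2 * q)\<close> a1 by simp
  qed
  then show ?thesis using el_bounds(1)[of 1] by linarith
next
  case False
  then show ?thesis using ell_eq[of n1 n3 1] q_ge1 r_lt by auto
qed

lemma el_odd_big: assumes "n1 \<le> 2 * r" "odd j" "1 \<le> j" "j \<le> n1" shows "el j = q + 1"
proof (cases "r \<le> n1 - r")
  case True
  then have "j \<le> 2 * r" using assms by linarith
  then show ?thesis using ell_eq[of n1 n3 j] assms True by simp
next
  case False
  then show ?thesis using ell_eq[of n1 n3 j] assms by simp
qed

lemma el_pair: assumes "1 \<le> a" "a \<le> n1" shows "3 \<le> el a + el (prv n1 a)"
proof (cases "q = 1")
  case False
  then show ?thesis using q_ge1 el_bounds(1)[of a] el_bounds(1)[of "prv n1 a"] by linarith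
next
  case True
  then have "3 * n1 \<le> 2 * (n1 + r)" using a5 n3_eq by simp
  then have h: "n1 \<le> 2 * r" by simp
  show ?thesis
  proof (cases "a = 1")
    case True
    then show ?thesis using el_1 el_pos[of "prv n1 a"] by simp
  next
    case False
    then have p: "prv n1 a = a - 1" unfolding prv_def by simp
    show ?thesis
    proof (cases "odd a")
      case True
      then show ?thesis using el_odd_big[OF h True assms] \<open>q = 1\<close> el_pos[of "prv n1 a"] by simp
    next
      case False
      then have "odd (a - 1)" using \<open>a \<noteq> 1\<close> assms by simp
      then show ?thesis using el_odd_big[OF h, of "a - 1"] \<open>q = 1\<close> el_pos[of a] p assms \<open>a \<noteq> 1\<close> by simp
    qed
  qed
qed

end

lemma coord_simps[simp]:
  "coord 1 (x, y, z) = x" "coord 2 (x, y, z) = y" "coord 3 (x, y, z) = z"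
  unfolding coord_def by auto

lemma coord_Suc0[simp]: "coord (Suc 0) (x, y, z) = x"
  unfolding coord_def by auto

lemma hyper_D: "(i, e) \<in> hyperedges W \<Longrightarrow> \<exists>a. e = Wsec W i a \<and> i \<in> {1,2,3}"
  unfolding hyperedges_def by auto

lemma Wsec_D: "w \<in> Wsec W i a \<Longrightarrow> w \<in> W \<and> coord i w = a"
  unfolding Wsec_def by auto

lemma Wsec_I: "w \<in> W \<Longrightarrow> coord i w = a \<Longrightarrow> w \<in> Wsec W i a"
  unfolding Wsec_def by auto

lemma nocycle_generic:
  fixes C :: "nat set" and b nx yL yR :: "nat \<Rightarrow> nat" and W :: "vertex set"
  assumes W: "W = (\<lambda>c. (b c, yL c, c)) ` C \<union> (\<lambda>c. (nx (b c), yR c, c)) ` C"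
  and nxne: "\<forall>c\<in>C. nx (b c) \<noteq> b c"
  and nxinj: "\<forall>c\<in>C. \<forall>c'\<in>C. nx (b c) = nx (b c') \<longrightarrow> b c = b c'"
  and H: "\<forall>w\<in>W. \<forall>i\<in>{1,2}. \<exists>u1 u2 u3. u1\<in>W \<and> u2\<in>W \<and> u3\<in>W \<and> distinct [u1,u2,u3] \<and>
            coord i u1 = coord i w \<and> coord i u2 = coord i w \<and> coord i u3 = coord i w"
  and A: "\<forall>c\<in>C. \<forall>c'\<in>C. c \<noteq> c' \<longrightarrow> b c = b c' \<longrightarrow> yL c \<noteq> yL c' \<and> yR c \<noteq> yR c'"
  and B: "\<forall>c\<in>C. \<forall>c'\<in>C. b c = nx (b c') \<longrightarrow> yR c \<noteq> yL c'"
  shows "\<not> has_bad_4cycle W"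
proof
  define Lv where "Lv = (\<lambda>c. (b c, yL c, c))"
  define Rv where "Rv = (\<lambda>c. (nx (b c), yR c, c))"
  have W': "W = Lv ` C \<union> Rv ` C" using W unfolding Lv_def Rv_def by simp
  have col: "\<exists>c\<in>C. (u = Lv c \<and> v = Rv c) \<or> (u = Rv c \<and> v = Lv c)"
    if "u \<in> W" "v \<in> W" "u \<noteq> v" "coord 3 u = coord 3 v" for u v
    using that unfolding W' Lv_def Rv_def by auto
  have not12: False if pr: "Wsec W i a = {w1, w2}" "i \<in> {1,2}" for i a w1 w2
  proof -
    have "w1 \<in> Wsec W i a" using pr by simp
    then have w1: "w1 \<in> W" "coord i w1 = a" using Wsec_D by auto
    obtain u1 u2 u3 where u: "u1\<in>W" "u2\<in>W" "u3\<in>W" "distinct [u1,u2,u3]"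
       "coord i u1 = a" "coord i u2 = a" "coord i u3 = a"
      using H w1 pr(2) by metis
    then have "u1 \<in> {w1,w2}" "u2 \<in> {w1,w2}" "u3 \<in> {w1,w2}"
      using Wsec_I[of _ W i a] pr(1) by auto
    then show False using u(4) by auto
  qed
  assume "has_bad_4cycle W"
  then obtain w1 w2 w3 w4 i j k e e' where
    ws: "w1 \<in> W" "w2 \<in> W" "w3 \<in> W" "w4 \<in> W" and d: "distinct [w1, w2, w3, w4]"
    and ijk: "{i, j, k} = {1, 2, 3::nat}"
    and h1: "(i, {w1, w2}) \<in> hyperedges W" and h2: "(i, {w3, w4}) \<in> hyperedges W"
    and e: "(j, e) \<in> hyperedges W" "w2 \<in> e" "w3 \<in> e"
    and e': "(k, e') \<in> hyperedges W" "w4 \<in> e'" "w1 \<in> e'"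
    unfolding has_bad_4cycle_def by blast
  obtain a where a: "{w1, w2} = Wsec W i a" "i \<in> {1,2,3}" using hyper_D[OF h1] by blast
  obtain a' where a': "{w3, w4} = Wsec W i a'" using hyper_D[OF h2] by blast
  have i3: "i = 3" using not12[of i a w1 w2] a by auto
  then have jk: "(j = 1 \<and> k = 2) \<or> (j = 2 \<and> k = 1)" using ijk
  proof -
    have "1 \<in> {i,j,k}" "2 \<in> {i,j,k}" "j \<in> {1,2,3::nat}" "k \<in> {1,2,3::nat}" using ijk by auto
    then show ?thesis using i3 by auto
  qed
  have ej: "coord j w2 = coord j w3"
  proof -
    obtain a2 where "e = Wsec W j a2" using hyper_D[OF e(1)] by blast
    then show ?thesis using e(2,3) Wsec_D by metis
  qed
  have ek: "coord k w4 = coord k w1"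
  proof -
    obtain a2 where "e' = Wsec W k a2" using hyper_D[OF e'(1)] by blast
    then show ?thesis using e'(2,3) Wsec_D by metis
  qed
  have "w1 \<in> Wsec W 3 a" "w2 \<in> Wsec W 3 a" using a(1) i3 by auto
  then have "coord 3 w1 = coord 3 w2" using Wsec_D by metis
  moreover have "w1 \<noteq> w2" using d by simp
  ultimately obtain c where c: "c \<in> C" "(w1 = Lv c \<and> w2 = Rv c) \<or> (w1 = Rv c \<and> w2 = Lv c)"
    using col[OF ws(1) ws(2)] by blast
  have "w3 \<in> Wsec W 3 a'" "w4 \<in> Wsec W 3 a'" using a'(1) i3 by auto
  then have "coord 3 w3 = coord 3 w4" using Wsec_D by metis
  moreover have "w3 \<noteq> w4" using d by simp
  ultimately obtain c' where c': "c' \<in> C" "(w3 = Lv c' \<and> w4 = Rv c') \<or> (w3 = Rv c' \<and> w4 = Lv c')"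
    using col[OF ws(3) ws(4)] by blast
  have cc: "c \<noteq> c'" using c c' d by auto
  note facts = A[rule_format, OF c(1) c'(1) cc] B[rule_format, OF c(1) c'(1)]
    B[rule_format, OF c'(1) c(1)] nxinj[rule_format, OF c(1) c'(1)]
  show False
    using jk ej ek c(2) c'(2) facts unfolding Lv_def Rv_def
    apply (elim disjE conjE) apply (simp_all only: Lv_def Rv_def coord_simps prod.inject)
    apply simp_all
    done
qed

context mc begin

lemma nxt_range: "1 \<le> i \<Longrightarrow> i \<le> n1 \<Longrightarrow> 1 \<le> nxt n1 i \<and> nxt n1 i \<le> n1"
  unfolding nxt_def using a1 by (cases "i = n1") simp_all
lemma nxt_ne: "1 \<le> i \<Longrightarrow> i \<le> n1 \<Longrightarrow> nxt n1 i \<noteq> i"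
  unfolding nxt_def using a1 by (cases "i = n1") simp_all
lemma nxt_inj: "1 \<le> i \<Longrightarrow> i \<le> n1 \<Longrightarrow> 1 \<le> j \<Longrightarrow> j \<le> n1 \<Longrightarrow> nxt n1 i = nxt n1 j \<Longrightarrow> i = j"
  unfolding nxt_def using a1 by (cases "i = n1"; cases "j = n1") simp_all
lemma prv_props: "1 \<le> a \<Longrightarrow> a \<le> n1 \<Longrightarrow> 1 \<le> prv n1 a \<and> prv n1 a \<le> n1 \<and> prv n1 a \<noteq> a \<and> nxt n1 (prv n1 a) = a"
  unfolding nxt_def prv_def using a1 by (cases "a = 1") (simp_all, arith)

lemma sf_range: "1 \<le> i \<Longrightarrow> i \<le> n1 \<Longrightarrow> 1 \<le> sf i \<and> sf i \<le> n3 \<and> bk (sf i) = i"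
  using sf_in[of i] inb_range[of i "sf i"] blk_eq[of i "sf i"] by auto
lemma sf2_range: "1 \<le> i \<Longrightarrow> i \<le> n1 \<Longrightarrow> 2 \<le> el i \<Longrightarrow> 1 \<le> Suc (sf i) \<and> Suc (sf i) \<le> n3 \<and> bk (Suc (sf i)) = i"
  using sf2_in[of i] inb_range[of i "Suc (sf i)"] blk_eq[of i "Suc (sf i)"] by auto

lemma H1_block:
  assumes "1 \<le> a" "a \<le> n1"
   and Wd: "W = (\<lambda>c. (bk c, yL c, c)) ` {1..n3} \<union> (\<lambda>c. (nxt n1 (bk c), yR c, c)) ` {1..n3}"
  shows "\<exists>u1 u2 u3. u1 \<in> W \<and> u2 \<in> W \<and> u3 \<in> W \<and> distinct [u1,u2,u3] \<and>
      coord 1 u1 = a \<and> coord 1 u2 = a \<and> coord 1 u3 = a"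
proof -
  define p where "p = prv n1 a"
  have p: "1 \<le> p" "p \<le> n1" "p \<noteq> a" "nxt n1 p = a" using prv_props[OF assms(1,2)] unfolding p_def by auto
  have sa: "1 \<le> sf a" "sf a \<le> n3" "bk (sf a) = a" using sf_range assms by auto
  have sp: "1 \<le> sf p" "sf p \<le> n3" "bk (sf p) = p" using sf_range p by auto
  have pair: "3 \<le> el a + el p" using el_pair[OF assms(1,2)] unfolding p_def .
  have mL: "(bk c, yL c, c) \<in> W" if "1 \<le> c" "c \<le> n3" for c
    unfolding Wd by (rule UnI1, rule rev_image_eqI[of c]) (use that in auto)
  have mR: "(nxt n1 (bk c), yR c, c) \<in> W" if "1 \<le> c" "c \<le> n3" for c
    unfolding Wd by (rule UnI2, rule rev_image_eqI[of c]) (use that in auto)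
  show ?thesis
  proof (cases "2 \<le> el a")
    case True
    have sa2: "1 \<le> Suc (sf a)" "Suc (sf a) \<le> n3" "bk (Suc (sf a)) = a" using sf2_range assms True by auto
    have d1: "sf p \<noteq> sf a" using sa(3) sp(3) p(3) by metis
    have d2: "sf p \<noteq> Suc (sf a)" using sa2(3) sp(3) p(3) by metis
    show ?thesis
      apply (rule exI[of _ "(bk (sf a), yL (sf a), sf a)"])
      apply (rule exI[of _ "(bk (Suc (sf a)), yL (Suc (sf a)), Suc (sf a))"])
      apply (rule exI[of _ "(nxt n1 (bk (sf p)), yR (sf p), sf p)"])
      using mL[OF sa(1,2)] mL[OF sa2(1,2)] mR[OF sp(1,2)] d1 d2 sa(3) sa2(3) sp(3) p(4)
      by simp
  next
    case False
    then have T: "2 \<le> el p" using pair by linarith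
    have sp2: "1 \<le> Suc (sf p)" "Suc (sf p) \<le> n3" "bk (Suc (sf p)) = p" using sf2_range p T by auto
    have d1: "sf a \<noteq> sf p" using sa(3) sp(3) p(3) by metis
    have d2: "sf a \<noteq> Suc (sf p)" using sa(3) sp2(3) p(3) by metis
    show ?thesis
      apply (rule exI[of _ "(bk (sf a), yL (sf a), sf a)"])
      apply (rule exI[of _ "(nxt n1 (bk (sf p)), yR (sf p), sf p)"])
      apply (rule exI[of _ "(nxt n1 (bk (Suc (sf p))), yR (Suc (sf p)), Suc (sf p))"])
      using mL[OF sa(1,2)] mR[OF sp2(1,2)] mR[OF sp(1,2)] d1 d2 sa(3) sp2(3) sp(3) p(4)
      by simp
  qed
qed

lemma H1:
  assumes W: "W = (\<lambda>c. (bk c, yL c, c)) ` {1..n3} \<union> (\<lambda>c. (nxt n1 (bk c), yR c, c)) ` {1..n3}"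
    and w: "w \<in> W"
  shows "\<exists>u1 u2 u3. u1 \<in> W \<and> u2 \<in> W \<and> u3 \<in> W \<and> distinct [u1,u2,u3] \<and>
      coord 1 u1 = coord 1 w \<and> coord 1 u2 = coord 1 w \<and> coord 1 u3 = coord 1 w"
proof -
  have "1 \<le> coord 1 w \<and> coord 1 w \<le> n1"
    using w unfolding W using blk_props nxt_range by fastforce
  then show ?thesis using H1_block[OF _ _ W, of "coord 1 w"] by blast
qed

end

lemma dvd_small: "(h::nat) dvd d \<Longrightarrow> d < h \<Longrightarrow> d = 0"
  using dvd_imp_le by fastforce

lemma mod_close_aux: "(x::nat) \<le> y \<Longrightarrow> y < x + h \<Longrightarrow> x mod h = y mod h \<Longrightarrow> x = y"
proof -
  assume a: "x \<le> y" "y < x + h" "x mod h = y mod h"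
  then have "h dvd y - x" using mod_eq_dvd_iff_nat[of x y h] by simp
  moreover have "y - x < h" using a by linarith
  ultimately have "y - x = 0" by (rule dvd_small)
  then show ?thesis using a by simp
qed

lemma mod_close: "a \<le> (x::nat) \<Longrightarrow> x < a + h \<Longrightarrow> a \<le> y \<Longrightarrow> y < a + h \<Longrightarrow> x mod h = y mod h \<Longrightarrow> x = y"
proof -
  assume a: "a \<le> x" "x < a + h" "a \<le> y" "y < a + h" "x mod h = y mod h"
  show "x = y"
  proof (cases "x \<le> y")
    case True
    then show ?thesis using mod_close_aux[of x y h] a by linarith
  next
    case False
    then show ?thesis using mod_close_aux[of y x h] a by fastforce
  qed
qed

locale mce = mc + assumes ev: "even n2"
begin

abbreviation "h \<equiv> n2 div 2"

lemma h2: "n2 = 2 * h" using ev by simp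
lemma h_ge: "2 \<le> h" using a2 h2 by linarith
lemma h3: "3 * h \<le> n3" using a5 h2 by simp

lemma el_le_h: "el i \<le> h"
proof -
  have "2 * n3 \<le> 2 * (n1 * h)" using a6 h2 by (simp add: ac_simps)
  then have n3h: "n3 \<le> n1 * h" by simp
  have "n1 * q \<le> n3" using n3_eq by linarith
  then have qh: "n1 * q \<le> n1 * h" using n3h by linarith
  then have "q \<le> h" using a1 by simp
  show ?thesis
  proof (cases "r = 0")
    case True
    then have "el i = q" using ell_eq[of n1 n3 i] by (cases i) simp_all
    then show ?thesis using \<open>q \<le> h\<close> by simp
  next
    case False
    then have "n1 * q < n1 * h" using n3h n3_eq by linarith
    then have "q < h" by simp
    then show ?thesis using el_bounds(2)[of i] by linarith
  qed
qed

definition "yLe c = (c - 1) mod h + 1"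
definition "yRe c = h + (c - 1) mod h + 1"

lemma yLe_le: "yLe c \<le> h" unfolding yLe_def using h_ge by (simp add: Suc_leI)
lemma yRe_gt: "h < yRe c" unfolding yRe_def by simp

lemma sameblock_mod:
  assumes "1 \<le> c" "c \<le> n3" "1 \<le> c'" "c' \<le> n3" "bk c = bk c'" "(c - 1) mod h = (c' - 1) mod h"
  shows "c = c'"
proof -
  have i: "inb (bk c) c" "inb (bk c) c'" using blk_props assms by metis+
  have "el (bk c) \<le> h" by (rule el_le_h)
  then have "LS (bk c) \<le> c - 1" "c - 1 < LS (bk c) + h" "LS (bk c) \<le> c' - 1" "c' - 1 < LS (bk c) + h"
    using i unfolding in_block_def by linarith+
  then have "c - 1 = c' - 1" using mod_close assms(6) by blast
  then show ?thesis using assms by linarith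
qed

lemma H2e:
  assumes W: "W = (\<lambda>c. (bk c, yLe c, c)) ` {1..n3} \<union> (\<lambda>c. (nxt n1 (bk c), yRe c, c)) ` {1..n3}"
    and w: "w \<in> W"
  shows "\<exists>u1 u2 u3. u1 \<in> W \<and> u2 \<in> W \<and> u3 \<in> W \<and> distinct [u1,u2,u3] \<and>
      coord 2 u1 = coord 2 w \<and> coord 2 u2 = coord 2 w \<and> coord 2 u3 = coord 2 w"
proof -
  have mL: "(bk c, yLe c, c) \<in> W" if "1 \<le> c" "c \<le> n3" for c
    unfolding W by (rule UnI1, rule rev_image_eqI[of c]) (use that in auto)
  have mR: "(nxt n1 (bk c), yRe c, c) \<in> W" if "1 \<le> c" "c \<le> n3" for c
    unfolding W by (rule UnI2, rule rev_image_eqI[of c]) (use that in auto)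
  obtain c where c: "1 \<le> c" "c \<le> n3" "w = (bk c, yLe c, c) \<or> w = (nxt n1 (bk c), yRe c, c)"
    using w unfolding W by auto
  define t where "t = (c - 1) mod h"
  have t: "t < h" unfolding t_def using h_ge by simp
  have cs: "1 \<le> t + 1" "t + 1 \<le> n3" "1 \<le> t + 1 + h" "t + 1 + h \<le> n3" "1 \<le> t + 1 + 2 * h" "t + 1 + 2 * h \<le> n3"
    using t h3 by linarith+
  have md: "(t + 1 - 1) mod h = t" "(t + 1 + h - 1) mod h = t" "(t + 1 + 2 * h - 1) mod h = t"
    using t by (simp_all add: add.commute[of t] mod_add_self1)
  have yl: "yLe (t + 1) = yLe c" "yLe (t + 1 + h) = yLe c" "yLe (t + 1 + 2 * h) = yLe c"
    using md unfolding yLe_def t_def by simp_all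
  have yr: "yRe (t + 1) = yRe c" "yRe (t + 1 + h) = yRe c" "yRe (t + 1 + 2 * h) = yRe c"
    using md unfolding yRe_def t_def by simp_all
  have hp: "0 < h" using h_ge by simp
  show ?thesis
  proof (cases "w = (bk c, yLe c, c)")
    case True
    show ?thesis
      apply (rule exI[of _ "(bk (t + 1), yLe (t + 1), t + 1)"])
      apply (rule exI[of _ "(bk (t + 1 + h), yLe (t + 1 + h), t + 1 + h)"])
      apply (rule exI[of _ "(bk (t + 1 + 2 * h), yLe (t + 1 + 2 * h), t + 1 + 2 * h)"])
      using mL[OF cs(1,2)] mL[OF cs(3,4)] mL[OF cs(5,6)] yl True hp by simp
  next
    case False
    then have wR: "w = (nxt n1 (bk c), yRe c, c)" using c(3) by simp
    show ?thesis
      apply (rule exI[of _ "(nxt n1 (bk (t + 1)), yRe (t + 1), t + 1)"])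
      apply (rule exI[of _ "(nxt n1 (bk (t + 1 + h)), yRe (t + 1 + h), t + 1 + h)"])
      apply (rule exI[of _ "(nxt n1 (bk (t + 1 + 2 * h)), yRe (t + 1 + 2 * h), t + 1 + 2 * h)"])
      using mR[OF cs(1,2)] mR[OF cs(3,4)] mR[OF cs(5,6)] yr wR hp by simp
  qed
qed

lemma even_ok: "\<not> has_bad_4cycle (left_set n1 n3 (yL_even n2) \<union> right_set n1 n3 (yR_even n2))"
proof -
  have e1: "yL_even n2 = yLe" unfolding yL_even_def yLe_def by auto
  have e2: "yR_even n2 = yRe" unfolding yR_even_def yRe_def by auto
  define W where "W = (\<lambda>c. (bk c, yLe c, c)) ` {1..n3} \<union> (\<lambda>c. (nxt n1 (bk c), yRe c, c)) ` {1..n3}"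
  have WW: "left_set n1 n3 (yL_even n2) \<union> right_set n1 n3 (yR_even n2) = W"
    unfolding e1 e2 W_def left_eq right_eq ..
  have "\<not> has_bad_4cycle W"
  proof (rule nocycle_generic[OF W_def])
    show "\<forall>c\<in>{1..n3}. nxt n1 (bk c) \<noteq> bk c" using blk_props nxt_ne by simp
    show "\<forall>c\<in>{1..n3}. \<forall>c'\<in>{1..n3}. nxt n1 (bk c) = nxt n1 (bk c') \<longrightarrow> bk c = bk c'"
      using blk_props nxt_inj by simp
    show "\<forall>w\<in>W. \<forall>i\<in>{1, 2}. \<exists>u1 u2 u3. u1 \<in> W \<and> u2 \<in> W \<and> u3 \<in> W \<and> distinct [u1, u2, u3] \<and>
            coord i u1 = coord i w \<and> coord i u2 = coord i w \<and> coord i u3 = coord i w"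
      using H1[OF W_def] H2e[OF W_def] by blast
    show "\<forall>c\<in>{1..n3}. \<forall>c'\<in>{1..n3}. c \<noteq> c' \<longrightarrow> bk c = bk c' \<longrightarrow> yLe c \<noteq> yLe c' \<and> yRe c \<noteq> yRe c'"
      using sameblock_mod unfolding yLe_def yRe_def by auto
    show "\<forall>c\<in>{1..n3}. \<forall>c'\<in>{1..n3}. bk c = nxt n1 (bk c') \<longrightarrow> yRe c \<noteq> yLe c'"
      using yLe_le yRe_gt by (metis not_le)
  qed
  then show ?thesis using WW by simp
qed

end

definition gc :: "nat set \<Rightarrow> nat \<Rightarrow> nat" where "gc T c = card ({1..c} - T)"

lemma fill_eq: "fill_odd n2 T base c = (if c \<in> T then n2 else base + ((gc T c - 1) mod fpar n2) + 1)"
proof -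
  have "{c' \<in> {1..c}. c' \<notin> T} = {1..c} - T" by auto
  then show ?thesis unfolding fill_odd_def gc_def by simp
qed

lemma gc_split: assumes "c \<le> c'" shows "gc T c' = gc T c + card ({Suc c..c'} - T)"
proof -
  have "{1..c'} - T = ({1..c} - T) \<union> ({Suc c..c'} - T)" using assms by auto
  moreover have "({1..c} - T) \<inter> ({Suc c..c'} - T) = {}" by auto
  ultimately show ?thesis unfolding gc_def by (simp add: card_Un_disjoint)
qed

lemma gc_mono: assumes "c < c'" "c' \<notin> T" shows "gc T c < gc T c'"
proof -
  have "c' \<in> {Suc c..c'} - T" using assms by auto
  then have "0 < card ({Suc c..c'} - T)" by (metis card_gt_0_iff empty_iff finite_Diff finite_atLeastAtMost)
  then show ?thesis using gc_split[of c c' T] assms by simp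
qed

lemma gc_pos: assumes "1 \<le> c" "c \<notin> T" shows "1 \<le> gc T c"
proof -
  have "c \<in> {1..c} - T" using assms by auto
  then have "0 < card ({1..c} - T)" by (metis card_gt_0_iff empty_iff finite_Diff finite_atLeastAtMost)
  then show ?thesis unfolding gc_def by simp
qed

lemma gc_surj: "1 \<le> m \<Longrightarrow> m \<le> gc T n \<Longrightarrow> \<exists>c. 1 \<le> c \<and> c \<le> n \<and> c \<notin> T \<and> gc T c = m"
proof (induction n)
  case 0
  then show ?case unfolding gc_def by simp
next
  case (Suc n)
  show ?case
  proof (cases "m \<le> gc T n")
    case True
    then show ?thesis using Suc by (meson le_SucI)
  next
    case False
    have sp: "gc T (Suc n) = gc T n + card ({Suc n..Suc n} - T)" by (rule gc_split) simp
    show ?thesis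
    proof (cases "Suc n \<in> T")
      case True
      then show ?thesis using sp False Suc.prems by simp
    next
      case F2: False
      then have "{Suc n..Suc n} - T = {Suc n}" by auto
      then have "gc T (Suc n) = gc T n + 1" using sp by simp
      then show ?thesis using False Suc.prems F2 by (intro exI[of _ "Suc n"]) simp
    qed
  qed
qed

lemma gc_lower: "finite T \<Longrightarrow> n - card T \<le> gc T n"
  unfolding gc_def using diff_card_le_card_Diff[of T "{1..n}"] by simp

lemma gc_block: assumes "c \<le> c'" shows "card ({Suc c..c'} - T) \<le> c' - c"
proof -
  have "card ({Suc c..c'} - T) \<le> card {Suc c..c'}" by (rule card_mono) auto
  then show ?thesis by simp
qed

lemma mod_ne: assumes "(x::nat) < y" "y < x + f" shows "x mod f \<noteq> y mod f"
  using mod_close_aux[of x y f] assms by auto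

locale mco = mc + assumes od: "odd n2"
begin

abbreviation "f \<equiv> fpar n2"
abbreviation "S \<equiv> Sset n1 n2 n3"
abbreviation "kk \<equiv> kcount n1 n2 n3"
abbreviation "Lng \<equiv> {i \<in> {1..n1}. f < el i}"
abbreviation "T' \<equiv> (\<lambda>s. s + 1) ` S"

lemma n2f: "n2 = 2 * f + 1" using od unfolding fpar_def by simp
lemma f_ge: "1 \<le> f" using a2 n2f by linarith
lemma n3_ge: "3 * f + 2 \<le> n3" using a5 n2f by simp

lemma q_le_f: "q \<le> f"
proof (rule ccontr)
  assume "\<not> q \<le> f"
  then have "2 * f + 2 \<le> 2 * q" by simp
  then have "n1 * (2 * f + 2) \<le> n1 * (2 * q)" by (rule mult_le_mono2)
  moreover have "n1 * q \<le> n3" using n3_eq by linarith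
  ultimately have "n1 * (2 * f + 2) \<le> 2 * n3" by linarith
  moreover have "2 * n3 \<le> n1 * (2 * f + 1)" using a6 n2f by simp
  ultimately have "n1 * (2 * f + 2) \<le> n1 * (2 * f + 1)" by linarith
  then show False using a1 by simp
qed

lemma long_props: assumes "f < el i" shows "el i = f + 1" "q = f" "0 < r" "2 * r \<le> n1"
proof -
  show e: "el i = f + 1" "q = f" using el_bounds[of i] q_le_f assms by linarith+
  show "0 < r"
  proof (rule ccontr)
    assume "\<not> 0 < r"
    then have "el i = q" using ell_eq[of n1 n3 i] by (cases i) simp_all
    then show False using e by simp
  qed
  have "2 * (n1 * f + r) \<le> n1 * (2 * f + 1)" using a6 n2f n3_eq e(2) by simp
  then show "2 * r \<le> n1" by (simp add: algebra_simps)
qed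

lemma long_iff: assumes "f < el i" shows "f < el j \<longleftrightarrow> j \<le> 2 * r \<and> odd j"
proof -
  have p: "q = f" "2 * r \<le> n1" using long_props[OF assms] by auto
  then have "r \<le> n1 - r" by linarith
  then have "el j = q + (if j \<le> 2 * r \<and> odd j then 1 else 0)" using ell_eq[of n1 n3 j] by simp
  then show ?thesis using p by simp
qed

lemma no_adj: assumes "1 \<le> b" "b \<le> n1" "f < el b" "f < el (nxt n1 b)" shows False
proof -
  have b: "b \<le> 2 * r" "odd b" using long_iff[OF assms(3), of b] assms(3) by auto
  have c: "odd (nxt n1 b)" using long_iff[OF assms(3), of "nxt n1 b"] assms(4) by auto
  have r2: "2 * r \<le> n1" using long_props[OF assms(3)] by simp
  show False
  proof (cases "b = n1")
    case True
    then have "n1 = 2 * r" using b r2 by simp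
    then have "b = 2 * r" using True by simp
    then show False using b(2) by simp
  next
    case False
    then show False using b c unfolding nxt_def by simp
  qed
qed

lemma long_1: assumes "f < el i" shows "f < el 1"
proof -
  have "0 < r" using long_props[OF assms] by simp
  then show ?thesis using long_iff[OF assms, of 1] by simp
qed

lemma kk_def': "kk = card Lng" unfolding kcount_def by simp

lemma sf1: "sf 1 = 1" unfolding sfirst_def by simp

lemma long_ge2: "f < el i \<Longrightarrow> 2 \<le> el i" using f_ge by linarith

lemma long_sf_S: assumes "1 \<le> i" "i \<le> n1" "f < el i" shows "sf i \<in> S"
proof (cases "2 \<le> kk")
  case True
  then show ?thesis unfolding Sset_def using assms by auto
next
  case False
  have "i = 1"
  proof (rule ccontr)
    assume "i \<noteq> 1"
    have "{1, i} \<subseteq> Lng" using assms long_1[OF assms(3)] a1 by auto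
    then have "card {1, i} \<le> card Lng" by (intro card_mono) auto
    then show False using False \<open>i \<noteq> 1\<close> kk_def' by simp
  qed
  then show ?thesis using False unfolding Sset_def using sf1 by simp
qed

lemma S_small: "\<not> 2 \<le> kk \<Longrightarrow> S = {1}" unfolding Sset_def by simp
lemma S_big: "2 \<le> kk \<Longrightarrow> S = sf ` Lng" unfolding Sset_def by auto

lemma S_elem: assumes "c \<in> S"
  shows "\<exists>i. 1 \<le> i \<and> i \<le> n1 \<and> c = sf i \<and> 2 \<le> el i \<and> (2 \<le> kk \<longrightarrow> f < el i)"
proof (cases "2 \<le> kk")
  case True
  then show ?thesis using assms S_big long_ge2 by auto
next
  case False
  then have "c = 1" using assms S_small by simp
  then show ?thesis using False sf1 el_1 a1 by (intro exI[of _ 1]) simp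
qed

lemma finS: "finite S"
  by (cases "2 \<le> kk") (simp_all add: S_big S_small)

lemma card_S: "card S \<le> max 1 kk"
proof (cases "2 \<le> kk")
  case True
  have "finite Lng" by simp
  then have "card S \<le> card Lng" using S_big[OF True] card_image_le by metis
  then show ?thesis using kk_def' by simp
next
  case False
  then show ?thesis using S_small by simp
qed

lemma sum_bound: assumes "2 \<le> kk" shows "n1 * f + kk \<le> n3"
proof -
  obtain i where "i \<in> Lng" using assms kk_def' by (metis card.empty empty_iff subsetI subset_antisym zero_order(1) not_numeral_le_zero)
  then have qf: "q = f" using long_props by auto
  have "(\<Sum>j\<in>{1..n1}. f + of_bool (f < el j)) \<le> (\<Sum>j\<in>{1..n1}. el j)"
  proof (rule sum_mono)
    fix j assume "j \<in> {1..n1}"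
    show "f + of_bool (f < el j) \<le> el j" using el_bounds(1)[of j] qf by (cases "f < el j") simp_all
  qed
  also have "\<dots> = n3" using LS_total unfolding Lsum_def by (simp add: atLeastLessThanSuc_atLeastAtMost)
  finally have "(\<Sum>j\<in>{1..n1}. f + of_bool (f < el j)) \<le> n3" .
  moreover have "(\<Sum>j\<in>{1..n1}. f + of_bool (f < el j)) = n1 * f + card ({1..n1} \<inter> {j. f < el j})"
    by (simp add: sum.distrib)
  moreover have "{1..n1} \<inter> {j. f < el j} = Lng" by auto
  ultimately show ?thesis using kk_def' by simp
qed

lemma G_left_big: "2 \<le> kk \<Longrightarrow> 3 * f \<le> gc S n3"
proof -
  assume k: "2 \<le> kk"
  have "n3 - card S \<le> gc S n3" using gc_lower finS by simp
  moreover have "card S \<le> kk" using card_S k by simp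
  moreover have "n1 * f + kk \<le> n3" using sum_bound k by simp
  moreover have "3 * f \<le> n1 * f" using a1 by simp
  ultimately show ?thesis by linarith
qed

lemma G_left_small: "\<not> 2 \<le> kk \<Longrightarrow> 3 * f + 1 \<le> gc S n3"
proof -
  assume k: "\<not> 2 \<le> kk"
  have "n3 - card S \<le> gc S n3" using gc_lower finS by simp
  then show ?thesis using S_small[OF k] n3_ge by simp
qed

lemma G_right: "3 * f \<le> gc T' n3"
proof -
  have "n3 - card T' \<le> gc T' n3" using gc_lower finS by simp
  moreover have "card T' \<le> card S" using card_image_le finS by blast
  moreover have "card S \<le> max 1 kk" by (rule card_S)
  moreover have "2 \<le> kk \<Longrightarrow> n1 * f + kk \<le> n3" using sum_bound by simp
  moreover have "3 * f \<le> n1 * f" using a1 by simp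
  ultimately show ?thesis using n3_ge by (cases "2 \<le> kk") linarith+
qed

end

locale mcz = mco + fixes Z :: "nat set"
  assumes Zp: "(2 \<le> kcount n1 n2 n3 \<and> Z = {}) \<or> (\<not> 2 \<le> kcount n1 n2 n3 \<and> (\<exists>z0. Z = {z0} \<and> 1 \<le> z0 \<and> z0 \<le> n3 \<and>
      blk n1 n3 z0 \<noteq> 1 \<and> blk n1 n3 z0 \<noteq> n1 \<and> yL_odd n1 n2 n3 z0 = 1))"
begin

definition "yLz c = (if c \<in> Z then n2 else yL_odd n1 n2 n3 c)"
abbreviation "yRo \<equiv> yR_odd n1 n2 n3"

lemma yL_odd_eq: "yL_odd n1 n2 n3 c = (if c \<in> S then n2 else (gc S c - 1) mod f + 1)"
  unfolding yL_odd_def fill_eq by simp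
lemma yR_eq: "yRo c = (if c \<in> T' then n2 else f + (gc T' c - 1) mod f + 1)"
  unfolding yR_odd_def fill_eq by simp

lemma yLz_n2: "c \<in> S \<union> Z \<Longrightarrow> yLz c = n2" unfolding yLz_def yL_odd_eq by auto
lemma yLz_val: "c \<notin> S \<union> Z \<Longrightarrow> yLz c = (gc S c - 1) mod f + 1" unfolding yLz_def yL_odd_eq by auto
lemma yLz_le: "c \<notin> S \<union> Z \<Longrightarrow> yLz c \<le> f"
  using yLz_val f_ge by (simp add: Suc_leI)
lemma yR_n2: "c \<in> T' \<Longrightarrow> yRo c = n2" unfolding yR_eq by auto
lemma yR_rng: "c \<notin> T' \<Longrightarrow> f < yRo c \<and> yRo c \<le> 2 * f"
  unfolding yR_eq using f_ge by (simp add: Suc_leI)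

lemma Z_small: "z \<in> Z \<Longrightarrow> \<not> 2 \<le> kk \<and> Z = {z} \<and> 1 \<le> z \<and> z \<le> n3 \<and> bk z \<noteq> 1 \<and> bk z \<noteq> n1 \<and> yL_odd n1 n2 n3 z = 1"
  using Zp by auto

lemma bk1: "bk 1 = 1" using sf_range[of 1] sf1 a1 by simp
lemma bk2s: "bk (Suc (Suc 0)) = 1" using sf2_range[of 1] sf1 a1 el_1 by simp
lemma bk2: "bk 2 = 1" using bk2s by (simp add: numeral_2_eq_2)

lemma SZ_block:
  assumes "c \<in> S \<union> Z" "c' \<in> S \<union> Z" "bk c = bk c'" shows "c = c'"
proof -
  have sS: "bk (sf i) = i" if "1 \<le> i" "i \<le> n1" for i using sf_range that by simp
  show ?thesis
  proof (cases "c \<in> Z")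
    case True
    note z = Z_small[OF True]
    show ?thesis
    proof (cases "c' \<in> Z")
      case True then show ?thesis using z by simp
    next
      case False
      then have "c' = 1" using assms(2) S_small z by simp
      then show ?thesis using z bk1 assms(3) by simp
    qed
  next
    case False
    then have cS: "c \<in> S" using assms(1) by simp
    show ?thesis
    proof (cases "c' \<in> Z")
      case True
      note z = Z_small[OF True]
      then have "c = 1" using cS S_small z by simp
      then show ?thesis using z bk1 assms(3) by simp
    next
      case False
      then have cS': "c' \<in> S" using assms(2) by simp
      obtain i where i: "1 \<le> i" "i \<le> n1" "c = sf i" using S_elem[OF cS] by blast
      obtain j where j: "1 \<le> j" "j \<le> n1" "c' = sf j" using S_elem[OF cS'] by blast
      show ?thesis using i j sS[OF i(1,2)] sS[OF j(1,2)] assms(3) by simp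
    qed
  qed
qed

lemma T_block:
  assumes "c \<in> T'" "c' \<in> T'" "bk c = bk c'" shows "c = c'"
proof -
  obtain s where s: "s \<in> S" "c = s + 1" using assms(1) by auto
  obtain s' where s': "s' \<in> S" "c' = s' + 1" using assms(2) by auto
  obtain i where i: "1 \<le> i" "i \<le> n1" "s = sf i" "2 \<le> el i" using S_elem[OF s(1)] by blast
  obtain j where j: "1 \<le> j" "j \<le> n1" "s' = sf j" "2 \<le> el j" using S_elem[OF s'(1)] by blast
  have "bk c = i" "bk c' = j" using sf2_range[OF i(1,2,4)] sf2_range[OF j(1,2,4)] s s' i j by simp_all
  then show ?thesis using assms(3) s s' i j by simp
qed

lemma block_pos:
  assumes "1 \<le> c" "c \<le> n3" "bk c = bk c'" "1 \<le> c'" "c' \<le> n3"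
  shows "LS (bk c) < c" "c \<le> LS (bk c) + el (bk c)" "LS (bk c) < c'" "c' \<le> LS (bk c) + el (bk c)"
  using blk_props[OF assms(1,2)] blk_props[OF assms(4,5)] assms(3) unfolding in_block_def by auto

lemma A_left_lt:
  assumes c: "1 \<le> c" "c < c'" "c' \<le> n3" "bk c = bk c'"
  shows "yLz c \<noteq> yLz c'"
proof -
  have f2: "f < n2" using n2f by simp
  show ?thesis
  proof (cases "c \<in> S \<union> Z")
    case True
    show ?thesis
    proof (cases "c' \<in> S \<union> Z")
      case True
      then show ?thesis using SZ_block[OF \<open>c \<in> S \<union> Z\<close> True c(4)] c by simp
    next
      case False
      then show ?thesis using yLz_n2[OF True] yLz_le[OF False] f2 by simp
    qed
  next
    case False
    note cn = False
    show ?thesis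
    proof (cases "c' \<in> S \<union> Z")
      case True
      then show ?thesis using yLz_n2[OF True] yLz_le[OF False] f2 by simp
    next
      case False
      define i where "i = bk c"
      have bp: "LS i < c" "c' \<le> LS i + el i" using block_pos[of c c'] c unfolding i_def by simp_all
      have i: "1 \<le> i" "i \<le> n1" using blk_props[of c] c unfolding i_def by simp_all
      have up: "card ({Suc c..c'} - S) \<le> f - 1"
      proof (cases "el i \<le> f")
        case True
        then show ?thesis using gc_block[of c c' S] c bp by linarith
      next
        case False
        then have "sf i \<in> S" "el i = f + 1" using long_sf_S[OF i] long_props by auto
        then have "c \<noteq> sf i" using cn by auto
        then have "LS i + 2 \<le> c" using bp unfolding sfirst_def by linarith
        then show ?thesis using gc_block[of c c' S] c bp \<open>el i = f + 1\<close> by linarith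
      qed
      have lo: "0 < card ({Suc c..c'} - S)"
      proof -
        have "c' \<in> {Suc c..c'} - S" using False c by auto
        then show ?thesis by (metis card_gt_0_iff empty_iff finite_Diff finite_atLeastAtMost)
      qed
      have sp: "gc S c' = gc S c + card ({Suc c..c'} - S)" using gc_split[of c c' S] c by simp
      have g1: "1 \<le> gc S c" using gc_pos[of c S] cn c by simp
      have "(gc S c - 1) mod f \<noteq> (gc S c' - 1) mod f"
        using mod_ne[of "gc S c - 1" "gc S c' - 1" f] sp up lo g1 f_ge by linarith
      then show ?thesis using yLz_val[OF cn] yLz_val[OF False] by simp
    qed
  qed
qed

lemma A_right_lt:
  assumes c: "1 \<le> c" "c < c'" "c' \<le> n3" "bk c = bk c'"
  shows "yRo c \<noteq> yRo c'"
proof -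
  have f2: "2 * f < n2" using n2f by simp
  show ?thesis
  proof (cases "c \<in> T'")
    case True
    show ?thesis
    proof (cases "c' \<in> T'")
      case True
      then show ?thesis using T_block[OF \<open>c \<in> T'\<close> True c(4)] c by simp
    next
      case False
      then show ?thesis using yR_n2[OF True] yR_rng[OF False] f2 by simp
    qed
  next
    case False
    note cn = False
    show ?thesis
    proof (cases "c' \<in> T'")
      case True
      then show ?thesis using yR_n2[OF True] yR_rng[OF False] f2 by simp
    next
      case False
      define i where "i = bk c"
      have bp: "LS i < c" "c' \<le> LS i + el i" using block_pos[of c c'] c unfolding i_def by simp_all
      have i: "1 \<le> i" "i \<le> n1" using blk_props[of c] c unfolding i_def by simp_all
      have up: "card ({Suc c..c'} - T') \<le> f - 1"
      proof (cases "el i \<le> f")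
        case True
        then show ?thesis using gc_block[of c c' T'] c bp by linarith
      next
        case False
        then have "sf i \<in> S" "el i = f + 1" using long_sf_S[OF i] long_props by auto
        then have st: "Suc (sf i) \<in> T'" by force
        then have "c \<noteq> Suc (sf i)" using cn by auto
        show ?thesis
        proof (cases "c = sf i")
          case True
          have "{Suc c..c'} - T' \<subseteq> {Suc (Suc c)..c'}"
          proof
            fix x assume x: "x \<in> {Suc c..c'} - T'"
            then have "x \<noteq> Suc c" using st True by blast
            then show "x \<in> {Suc (Suc c)..c'}" using x by simp
          qed
          then have "card ({Suc c..c'} - T') \<le> card {Suc (Suc c)..c'}" by (intro card_mono) auto
          then show ?thesis using True bp \<open>el i = f + 1\<close> unfolding sfirst_def by simp
        next
          case False
          then have "LS i + 3 \<le> c" using bp \<open>c \<noteq> Suc (sf i)\<close> unfolding sfirst_def by linarith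
          then show ?thesis using gc_block[of c c' T'] c bp \<open>el i = f + 1\<close> by linarith
        qed
      qed
      have lo: "0 < card ({Suc c..c'} - T')"
      proof -
        have "c' \<in> {Suc c..c'} - T'" using False c by auto
        then show ?thesis by (metis card_gt_0_iff empty_iff finite_Diff finite_atLeastAtMost)
      qed
      have sp: "gc T' c' = gc T' c + card ({Suc c..c'} - T')" using gc_split[of c c' T'] c by simp
      have g1: "1 \<le> gc T' c" using gc_pos[of c T'] cn c by simp
      have "(gc T' c - 1) mod f \<noteq> (gc T' c' - 1) mod f"
        using mod_ne[of "gc T' c - 1" "gc T' c' - 1" f] sp up lo g1 f_ge by linarith
      then show ?thesis using yR_eq cn False by simp
    qed
  qed
qed

lemma A_odd:
  assumes "1 \<le> c" "c \<le> n3" "1 \<le> c'" "c' \<le> n3" "c \<noteq> c'" "bk c = bk c'"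
  shows "yLz c \<noteq> yLz c' \<and> yRo c \<noteq> yRo c'"
proof (cases "c < c'")
  case True
  then show ?thesis using A_left_lt[of c c'] A_right_lt[of c c'] assms by simp
next
  case False
  then have "c' < c" using assms by simp
  then show ?thesis using A_left_lt[of c' c] A_right_lt[of c' c] assms by fastforce
qed

lemma B_odd:
  assumes "1 \<le> c" "c \<le> n3" "1 \<le> c'" "c' \<le> n3" "bk c = nxt n1 (bk c')"
  shows "yRo c \<noteq> yLz c'"
proof
  assume eq: "yRo c = yLz c'"
  have cT: "c \<in> T'"
  proof (rule ccontr)
    assume "c \<notin> T'"
    then have "f < yRo c" "yRo c \<le> 2 * f" using yR_rng by auto
    moreover have "c' \<in> S \<union> Z \<or> yLz c' \<le> f" using yLz_le by blast
    ultimately show False using eq yLz_n2 n2f by fastforce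
  qed
  have cS: "c' \<in> S \<union> Z"
  proof (rule ccontr)
    assume "c' \<notin> S \<union> Z"
    then show False using yLz_le eq yR_n2[OF cT] n2f by fastforce
  qed
  obtain s where s: "s \<in> S" "c = s + 1" using cT by auto
  have b': "1 \<le> bk c'" "bk c' \<le> n1" using blk_props assms by auto
  show False
  proof (cases "2 \<le> kk")
    case True
    then have Ze: "Z = {}" using Zp by auto
    obtain i where i: "1 \<le> i" "i \<le> n1" "s = sf i" "2 \<le> el i" "f < el i" using S_elem[OF s(1)] True by blast
    have "bk c = i" using sf2_range[OF i(1,2,4)] s i by simp
    obtain j where j: "1 \<le> j" "j \<le> n1" "c' = sf j" "f < el j" using S_elem[of c'] cS Ze True by auto
    have "bk c' = j" using sf_range[OF j(1,2)] j by simp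
    then show False using no_adj[OF j(1,2,4)] \<open>bk c = i\<close> assms(5) i by simp
  next
    case False
    then have "s = 1" using s S_small by simp
    then have "bk c = 1" using s bk2s by simp
    then have "nxt n1 (bk c') = 1" using assms(5) by simp
    then have bn: "bk c' = n1" using b' a1 unfolding nxt_def by (cases "bk c' = n1") simp_all
    show False
    proof (cases "c' \<in> Z")
      case True
      then show False using Z_small bn by blast
    next
      case F2: False
      then have "c' = 1" using cS S_small False by simp
      then show False using bn bk1 a1 by simp
    qed
  qed
qed

end

lemma two_elems: assumes "2 \<le> card A" shows "\<exists>a b. a \<in> A \<and> b \<in> A \<and> a \<noteq> b"
proof -
  have fin: "finite A" using assms by (metis card.infinite not_numeral_le_zero)
  have "A \<noteq> {}" using assms by auto
  then obtain a where a: "a \<in> A" by auto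
  have "card (A - {a}) = card A - 1" using a fin by simp
  then have "card (A - {a}) \<noteq> 0" using assms by simp
  then have "A - {a} \<noteq> {}" by (metis card.empty)
  then obtain b where "b \<in> A - {a}" by auto
  then show ?thesis using a by blast
qed

lemma mod_shift: "(t::nat) < f \<Longrightarrow> (t + u * f) mod f = t" by simp

context mcz begin

definition "Wz = (\<lambda>c. (bk c, yLz c, c)) ` {1..n3} \<union> (\<lambda>c. (nxt n1 (bk c), yRo c, c)) ` {1..n3}"

lemma mL: "1 \<le> c \<Longrightarrow> c \<le> n3 \<Longrightarrow> (bk c, yLz c, c) \<in> Wz"
  unfolding Wz_def by (rule UnI1, rule rev_image_eqI[of c]) auto
lemma mR: "1 \<le> c \<Longrightarrow> c \<le> n3 \<Longrightarrow> (nxt n1 (bk c), yRo c, c) \<in> Wz"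
  unfolding Wz_def by (rule UnI2, rule rev_image_eqI[of c]) auto

lemma n2_triple: "\<exists>u1 u2 u3. u1 \<in> Wz \<and> u2 \<in> Wz \<and> u3 \<in> Wz \<and> distinct [u1,u2,u3] \<and>
      coord 2 u1 = n2 \<and> coord 2 u2 = n2 \<and> coord 2 u3 = n2"
proof (cases "2 \<le> kk")
  case True
  obtain i j where ij: "i \<in> Lng" "j \<in> Lng" "i \<noteq> j" using two_elems[of Lng] True kk_def' by auto
  have i: "1 \<le> i" "i \<le> n1" "f < el i" using ij by auto
  have j: "1 \<le> j" "j \<le> n1" "f < el j" using ij by auto
  have si: "1 \<le> sf i" "sf i \<le> n3" "bk (sf i) = i" using sf_range i by auto
  have sj: "1 \<le> sf j" "sf j \<le> n3" "bk (sf j) = j" using sf_range j by auto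
  have si2: "1 \<le> Suc (sf i)" "Suc (sf i) \<le> n3" "bk (Suc (sf i)) = i" using sf2_range i long_ge2 by auto
  have inS: "sf i \<in> S" "sf j \<in> S" using long_sf_S i j by auto
  then have inT: "Suc (sf i) \<in> T'" by force
  have v: "yLz (sf i) = n2" "yLz (sf j) = n2" "yRo (Suc (sf i)) = n2"
    using yLz_n2 inS yR_n2[OF inT] by auto
  have d1: "sf i \<noteq> sf j" using si(3) sj(3) ij(3) by metis
  have d2: "Suc (sf i) \<noteq> sf j" using si2(3) sj(3) ij(3) by metis
  note d = d1 d2
  show ?thesis
    apply (rule exI[of _ "(bk (sf i), yLz (sf i), sf i)"])
    apply (rule exI[of _ "(bk (sf j), yLz (sf j), sf j)"])
    apply (rule exI[of _ "(nxt n1 (bk (Suc (sf i))), yRo (Suc (sf i)), Suc (sf i))"])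
    using mL[OF si(1,2)] mL[OF sj(1,2)] mR[OF si2(1,2)] v d by simp
next
  case False
  then obtain z0 where z: "Z = {z0}" "1 \<le> z0" "z0 \<le> n3" "bk z0 \<noteq> 1" using Zp by auto
  have S1: "S = {1}" using S_small False by simp
  have inT: "2 \<in> T'" using S1 by simp
  have v: "yLz 1 = n2" "yLz z0 = n2" "yRo 2 = n2"
    using yLz_n2 S1 z yR_n2[OF inT] by auto
  have d: "z0 \<noteq> 1" "z0 \<noteq> 2" using z bk1 bk2 by auto
  have r: "(1::nat) \<le> 1" "1 \<le> n3" "(1::nat) \<le> 2" "2 \<le> n3" using a1 a3 by auto
  show ?thesis
    apply (rule exI[of _ "(bk 1, yLz 1, 1)"])
    apply (rule exI[of _ "(bk z0, yLz z0, z0)"])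
    apply (rule exI[of _ "(nxt n1 (bk 2), yRo 2, 2)"])
    using mL[OF r(1,2)] mL[OF z(2,3)] mR[OF r(3,4)] v d by simp
qed

lemma col_left: assumes "1 \<le> m" "m \<le> gc S n3"
  shows "\<exists>c. 1 \<le> c \<and> c \<le> n3 \<and> c \<notin> S \<and> gc S c = m \<and> yL_odd n1 n2 n3 c = (m - 1) mod f + 1"
  using gc_surj[OF assms] yL_odd_eq by auto

lemma col_right: assumes "1 \<le> m" "m \<le> gc T' n3"
  shows "\<exists>c. 1 \<le> c \<and> c \<le> n3 \<and> c \<notin> T' \<and> gc T' c = m \<and> yRo c = f + (m - 1) mod f + 1"
  using gc_surj[OF assms] yR_eq by auto

lemma left_triple: assumes t: "t < f" and k: "2 \<le> kk \<or> t \<noteq> 0"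
  shows "\<exists>u1 u2 u3. u1 \<in> Wz \<and> u2 \<in> Wz \<and> u3 \<in> Wz \<and> distinct [u1,u2,u3] \<and>
      coord 2 u1 = t + 1 \<and> coord 2 u2 = t + 1 \<and> coord 2 u3 = t + 1"
proof -
  have G: "3 * f \<le> gc S n3" using G_left_big G_left_small by (cases "2 \<le> kk") auto
  have "\<exists>c. 1 \<le> c \<and> c \<le> n3 \<and> c \<notin> S \<and> gc S c = t + 1 + u * f \<and> yLz c = t + 1" if u: "u \<le> 2" for u
  proof -
    have "u * f \<le> 2 * f" using u by simp
    then obtain c where c: "1 \<le> c" "c \<le> n3" "c \<notin> S" "gc S c = t + 1 + u * f"
        "yL_odd n1 n2 n3 c = (t + 1 + u * f - 1) mod f + 1"
    proof -
      have "t + 1 + u * f \<le> gc S n3" using G t \<open>u * f \<le> 2 * f\<close> by linarith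
      then show ?thesis using col_left[of "t + 1 + u * f"] that by auto
    qed
    then have y: "yL_odd n1 n2 n3 c = t + 1" using mod_shift[OF t] by simp
    have "c \<notin> Z"
    proof
      assume "c \<in> Z"
      then show False using Z_small[of c] k y by auto
    qed
    then show ?thesis using c y unfolding yLz_def by auto
  qed
  note ex = this
  obtain c0 c1 c2 where
    c0: "1 \<le> c0" "c0 \<le> n3" "gc S c0 = t + 1 + 0 * f" "yLz c0 = t + 1" and
    c1: "1 \<le> c1" "c1 \<le> n3" "gc S c1 = t + 1 + 1 * f" "yLz c1 = t + 1" and
    c2: "1 \<le> c2" "c2 \<le> n3" "gc S c2 = t + 1 + 2 * f" "yLz c2 = t + 1"
    using ex[of 0] ex[of 1] ex[of 2] by auto
  have d: "c0 \<noteq> c1" "c0 \<noteq> c2" "c1 \<noteq> c2" using c0(3) c1(3) c2(3) f_ge by auto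
  show ?thesis
    apply (rule exI[of _ "(bk c0, yLz c0, c0)"])
    apply (rule exI[of _ "(bk c1, yLz c1, c1)"])
    apply (rule exI[of _ "(bk c2, yLz c2, c2)"])
    using mL[OF c0(1,2)] mL[OF c1(1,2)] mL[OF c2(1,2)] c0(4) c1(4) c2(4) d by simp
qed

lemma left_triple0: assumes k: "\<not> 2 \<le> kk"
  shows "\<exists>u1 u2 u3. u1 \<in> Wz \<and> u2 \<in> Wz \<and> u3 \<in> Wz \<and> distinct [u1,u2,u3] \<and>
      coord 2 u1 = 1 \<and> coord 2 u2 = 1 \<and> coord 2 u3 = 1"
proof -
  have G: "3 * f + 1 \<le> gc S n3" using G_left_small k by auto
  obtain z0 where z: "Z = {z0}" using Zp k by blast
  have "\<exists>c. 1 \<le> c \<and> c \<le> n3 \<and> c \<notin> S \<and> gc S c = 1 + u * f \<and> yL_odd n1 n2 n3 c = 1" if u: "u \<le> 3" for u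
  proof -
    have "u * f \<le> 3 * f" using u by simp
    then obtain c where c: "1 \<le> c" "c \<le> n3" "c \<notin> S" "gc S c = 1 + u * f"
        "yL_odd n1 n2 n3 c = (1 + u * f - 1) mod f + 1"
    proof -
      have "1 + u * f \<le> gc S n3" using G \<open>u * f \<le> 3 * f\<close> by linarith
      then show ?thesis using col_left[of "1 + u * f"] that by auto
    qed
    moreover have "(1 + u * f - 1) mod f = 0" by simp
    ultimately show ?thesis by auto
  qed
  note ex = this
  obtain c0 where c0: "1 \<le> c0" "c0 \<le> n3" "gc S c0 = 1" "yL_odd n1 n2 n3 c0 = 1" using ex[of 0] by auto
  obtain c1 where c1: "1 \<le> c1" "c1 \<le> n3" "gc S c1 = 1 + f" "yL_odd n1 n2 n3 c1 = 1" using ex[of 1] by auto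
  obtain c2 where c2: "1 \<le> c2" "c2 \<le> n3" "gc S c2 = 1 + 2 * f" "yL_odd n1 n2 n3 c2 = 1" using ex[of 2] by auto
  obtain c3 where c3: "1 \<le> c3" "c3 \<le> n3" "gc S c3 = 1 + 3 * f" "yL_odd n1 n2 n3 c3 = 1" using ex[of 3] by auto
  have fg: "1 \<le> f" by (rule f_ge)
  have d1: "c0 \<noteq> c1" using c0(3) c1(3) fg by auto
  have d2: "c0 \<noteq> c2" using c0(3) c2(3) fg by auto
  have d3: "c1 \<noteq> c2" using c1(3) c2(3) fg by auto
  have d4: "c0 \<noteq> c3" using c0(3) c3(3) fg by auto
  have d5: "c1 \<noteq> c3" using c1(3) c3(3) fg by auto
  have d6: "c2 \<noteq> c3" using c2(3) c3(3) fg by auto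
  note d = d1 d2 d3 d4 d5 d6
  have yv: "yLz c = 1" if "yL_odd n1 n2 n3 c = 1" "c \<noteq> z0" for c
    using that z unfolding yLz_def by simp
  have tri: "\<exists>u1 u2 u3. u1 \<in> Wz \<and> u2 \<in> Wz \<and> u3 \<in> Wz \<and> distinct [u1,u2,u3] \<and>
      coord 2 u1 = 1 \<and> coord 2 u2 = 1 \<and> coord 2 u3 = 1"
    if "1 \<le> a" "a \<le> n3" "1 \<le> b" "b \<le> n3" "1 \<le> e" "e \<le> n3" "a \<noteq> b" "a \<noteq> e" "b \<noteq> e"
       "yLz a = 1" "yLz b = 1" "yLz e = 1" for a b e
    apply (rule exI[of _ "(bk a, yLz a, a)"])
    apply (rule exI[of _ "(bk b, yLz b, b)"])
    apply (rule exI[of _ "(bk e, yLz e, e)"])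
    using mL[OF that(1,2)] mL[OF that(3,4)] mL[OF that(5,6)] that(7-12) by simp
  show ?thesis
  proof (cases "z0 = c0")
    case True
    have h: "c1 \<noteq> z0" "c2 \<noteq> z0" "c3 \<noteq> z0" using d True by auto
    show ?thesis by (rule tri[OF c1(1,2) c2(1,2) c3(1,2) d(3) d(5) d(6) yv[OF c1(4) h(1)] yv[OF c2(4) h(2)] yv[OF c3(4) h(3)]])
  next
    case F0: False
    show ?thesis
    proof (cases "z0 = c1")
      case True
      have h: "c0 \<noteq> z0" "c2 \<noteq> z0" "c3 \<noteq> z0" using d True by auto
      show ?thesis by (rule tri[OF c0(1,2) c2(1,2) c3(1,2) d(2) d(4) d(6) yv[OF c0(4) h(1)] yv[OF c2(4) h(2)] yv[OF c3(4) h(3)]])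
    next
      case F1: False
      show ?thesis
      proof (cases "z0 = c2")
        case True
        have h: "c0 \<noteq> z0" "c1 \<noteq> z0" "c3 \<noteq> z0" using d True by auto
        show ?thesis by (rule tri[OF c0(1,2) c1(1,2) c3(1,2) d(1) d(4) d(5) yv[OF c0(4) h(1)] yv[OF c1(4) h(2)] yv[OF c3(4) h(3)]])
      next
        case F2: False
        have h: "c0 \<noteq> z0" "c1 \<noteq> z0" "c2 \<noteq> z0" using F0 F1 F2 by auto
        show ?thesis by (rule tri[OF c0(1,2) c1(1,2) c2(1,2) d(1) d(2) d(3) yv[OF c0(4) h(1)] yv[OF c1(4) h(2)] yv[OF c2(4) h(3)]])
      qed
    qed
  qed
qed

lemma right_triple: assumes t: "t < f"
  shows "\<exists>u1 u2 u3. u1 \<in> Wz \<and> u2 \<in> Wz \<and> u3 \<in> Wz \<and> distinct [u1,u2,u3] \<and>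
      coord 2 u1 = f + t + 1 \<and> coord 2 u2 = f + t + 1 \<and> coord 2 u3 = f + t + 1"
proof -
  have G: "3 * f \<le> gc T' n3" by (rule G_right)
  have "\<exists>c. 1 \<le> c \<and> c \<le> n3 \<and> gc T' c = t + 1 + u * f \<and> yRo c = f + t + 1" if u: "u \<le> 2" for u
  proof -
    have "u * f \<le> 2 * f" using u by simp
    then obtain c where c: "1 \<le> c" "c \<le> n3" "c \<notin> T'" "gc T' c = t + 1 + u * f"
        "yRo c = f + (t + 1 + u * f - 1) mod f + 1"
    proof -
      have "t + 1 + u * f \<le> gc T' n3" using G t \<open>u * f \<le> 2 * f\<close> by linarith
      then show ?thesis using col_right[of "t + 1 + u * f"] that by auto
    qed
    then show ?thesis using mod_shift[OF t] by auto
  qed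
  note ex = this
  obtain c0 c1 c2 where
    c0: "1 \<le> c0" "c0 \<le> n3" "gc T' c0 = t + 1 + 0 * f" "yRo c0 = f + t + 1" and
    c1: "1 \<le> c1" "c1 \<le> n3" "gc T' c1 = t + 1 + 1 * f" "yRo c1 = f + t + 1" and
    c2: "1 \<le> c2" "c2 \<le> n3" "gc T' c2 = t + 1 + 2 * f" "yRo c2 = f + t + 1"
    using ex[of 0] ex[of 1] ex[of 2] by auto
  have d: "c0 \<noteq> c1" "c0 \<noteq> c2" "c1 \<noteq> c2" using c0(3) c1(3) c2(3) f_ge by auto
  show ?thesis
    apply (rule exI[of _ "(nxt n1 (bk c0), yRo c0, c0)"])
    apply (rule exI[of _ "(nxt n1 (bk c1), yRo c1, c1)"])
    apply (rule exI[of _ "(nxt n1 (bk c2), yRo c2, c2)"])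
    using mR[OF c0(1,2)] mR[OF c1(1,2)] mR[OF c2(1,2)] c0(4) c1(4) c2(4) d by simp
qed

lemma H2_odd: assumes w: "w \<in> Wz"
  shows "\<exists>u1 u2 u3. u1 \<in> Wz \<and> u2 \<in> Wz \<and> u3 \<in> Wz \<and> distinct [u1,u2,u3] \<and>
      coord 2 u1 = coord 2 w \<and> coord 2 u2 = coord 2 w \<and> coord 2 u3 = coord 2 w"
proof -
  obtain c where c: "1 \<le> c" "c \<le> n3" "w = (bk c, yLz c, c) \<or> w = (nxt n1 (bk c), yRo c, c)"
    using w unfolding Wz_def by auto
  show ?thesis
  proof (cases "w = (bk c, yLz c, c)")
    case True
    show ?thesis
    proof (cases "c \<in> S \<union> Z")
      case True
      then show ?thesis using n2_triple yLz_n2 \<open>w = (bk c, yLz c, c)\<close> by simp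
    next
      case False
      define t where "t = (gc S c - 1) mod f"
      have t: "t < f" unfolding t_def using f_ge by simp
      have cw: "coord 2 w = t + 1" using yLz_val[OF False] \<open>w = (bk c, yLz c, c)\<close> t_def by simp
      show ?thesis
      proof (cases "\<not> 2 \<le> kk \<and> t = 0")
        case True
        then show ?thesis using left_triple0 cw by simp
      next
        case False
        then show ?thesis using left_triple[OF t] cw by auto
      qed
    qed
  next
    case False
    then have wR: "w = (nxt n1 (bk c), yRo c, c)" using c(3) by simp
    show ?thesis
    proof (cases "c \<in> T'")
      case True
      then show ?thesis using n2_triple yR_n2[OF True] wR by simp
    next
      case False
      define t where "t = (gc T' c - 1) mod f"
      have t: "t < f" unfolding t_def using f_ge by simp
      have cw: "coord 2 w = f + t + 1" using yR_eq False wR t_def by simp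
      then show ?thesis using right_triple[OF t] by simp
    qed
  qed
qed

end

context mcz begin

lemma odd_ok: "\<not> has_bad_4cycle Wz"
proof (rule nocycle_generic[OF Wz_def])
  show "\<forall>c\<in>{1..n3}. nxt n1 (bk c) \<noteq> bk c" using blk_props nxt_ne by simp
  show "\<forall>c\<in>{1..n3}. \<forall>c'\<in>{1..n3}. nxt n1 (bk c) = nxt n1 (bk c') \<longrightarrow> bk c = bk c'"
    using blk_props nxt_inj by simp
  show "\<forall>w\<in>Wz. \<forall>i\<in>{1, 2}. \<exists>u1 u2 u3. u1 \<in> Wz \<and> u2 \<in> Wz \<and> u3 \<in> Wz \<and> distinct [u1, u2, u3] \<and>
          coord i u1 = coord i w \<and> coord i u2 = coord i w \<and> coord i u3 = coord i w"
    using H1[OF Wz_def] H2_odd by blast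
  show "\<forall>c\<in>{1..n3}. \<forall>c'\<in>{1..n3}. c \<noteq> c' \<longrightarrow> bk c = bk c' \<longrightarrow> yLz c \<noteq> yLz c' \<and> yRo c \<noteq> yRo c'"
    using A_odd by simp
  show "\<forall>c\<in>{1..n3}. \<forall>c'\<in>{1..n3}. bk c = nxt n1 (bk c') \<longrightarrow> yRo c \<noteq> yLz c'"
    using B_odd by simp
qed

end

theorem mainTheorem8:
  fixes n1 n2 n3 :: nat and W :: "vertex set"
  assumes "3 \<le> n1" and "3 \<le> n2" and "n1 \<le> n3" and "n2 \<le> n3"
    and "3 * max n1 n2 \<le> 2 * n3" and "2 * n3 \<le> n1 * n2"
    and "W \<in> middle_cone n1 n2 n3"
  shows "\<not> has_bad_4cycle W"
proof -
  interpret mc n1 n2 n3 by unfold_locales (use assms in auto)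
  show ?thesis
  proof (cases "even n2")
    case True
    interpret mce n1 n2 n3 by unfold_locales (use True in auto)
    have "W = left_set n1 n3 (yL_even n2) \<union> right_set n1 n3 (yR_even n2)"
      using assms(7) True unfolding middle_cone_def by simp
    then show ?thesis using even_ok by simp
  next
    case False
    interpret mco n1 n2 n3 by unfold_locales (use False in auto)
    show ?thesis
    proof (cases "2 \<le> kcount n1 n2 n3")
      case True
      interpret mcz n1 n2 n3 "{}" by unfold_locales (use True in auto)
      have "W = left_set n1 n3 (yL_odd n1 n2 n3) \<union> right_set n1 n3 (yR_odd n1 n2 n3)"
        using assms(7) True False unfolding middle_cone_def by simp
      moreover have "yLz = yL_odd n1 n2 n3" unfolding yLz_def by auto
      ultimately have "W = Wz" unfolding Wz_def left_eq right_eq by simp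
      then show ?thesis using odd_ok by simp
    next
      case T2: False
      obtain x z where W: "W = insert (x, n2, z) (left_set n1 n3 (yL_odd n1 n2 n3) - {(x, 1, z)})
           \<union> right_set n1 n3 (yR_odd n1 n2 n3)"
        and xz: "(x, 1, z) \<in> left_set n1 n3 (yL_odd n1 n2 n3)" "x \<notin> {1, 2, n1}"
        using assms(7) T2 False unfolding middle_cone_def by auto
      obtain c where c: "1 \<le> c" "c \<le> n3" "(x, 1, z) = (bk c, yL_odd n1 n2 n3 c, c)"
        using xz(1) unfolding left_eq by auto
      then have zc: "z = c" "x = bk c" "yL_odd n1 n2 n3 c = 1" by auto
      interpret mcz n1 n2 n3 "{z}" by unfold_locales (use T2 c zc xz(2) in auto)
      have yl: "yLz = (yL_odd n1 n2 n3)(z := n2)" unfolding yLz_def by auto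
      have "insert (x, n2, z) ((\<lambda>c. (bk c, yL_odd n1 n2 n3 c, c)) ` {1..n3} - {(x, 1, z)})
           = (\<lambda>c. (bk c, yLz c, c)) ` {1..n3}"
      proof
        show "insert (x, n2, z) ((\<lambda>c. (bk c, yL_odd n1 n2 n3 c, c)) ` {1..n3} - {(x, 1, z)})
            \<subseteq> (\<lambda>c. (bk c, yLz c, c)) ` {1..n3}"
        proof
          fix u assume u: "u \<in> insert (x, n2, z) ((\<lambda>c. (bk c, yL_odd n1 n2 n3 c, c)) ` {1..n3} - {(x, 1, z)})"
          show "u \<in> (\<lambda>c. (bk c, yLz c, c)) ` {1..n3}"
          proof (cases "u = (x, n2, z)")
            case True
            then show ?thesis using zc c yl by (intro rev_image_eqI[of z]) auto
          next
            case False
            then have u2: "u \<in> (\<lambda>c. (bk c, yL_odd n1 n2 n3 c, c)) ` {1..n3}" "u \<noteq> (x, 1, z)"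
              using u by auto
            then obtain d where d0: "d \<in> {1..n3}" "u = (bk d, yL_odd n1 n2 n3 d, d)" using u2(1) by blast
            then have d: "1 \<le> d" "d \<le> n3" "u = (bk d, yL_odd n1 n2 n3 d, d)" "u \<noteq> (x, 1, z)" using u2 by auto
            then have "d \<noteq> z" using zc by auto
            then show ?thesis using d yl by (intro rev_image_eqI[of d]) auto
          qed
        qed
        show "(\<lambda>c. (bk c, yLz c, c)) ` {1..n3}
            \<subseteq> insert (x, n2, z) ((\<lambda>c. (bk c, yL_odd n1 n2 n3 c, c)) ` {1..n3} - {(x, 1, z)})"
        proof
          fix u assume "u \<in> (\<lambda>c. (bk c, yLz c, c)) ` {1..n3}"
          then obtain d where d: "1 \<le> d" "d \<le> n3" "u = (bk d, yLz d, d)" by auto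
          show "u \<in> insert (x, n2, z) ((\<lambda>c. (bk c, yL_odd n1 n2 n3 c, c)) ` {1..n3} - {(x, 1, z)})"
          proof (cases "d = z")
            case True
            then show ?thesis using d zc yl by simp
          next
            case False
            then have "u = (bk d, yL_odd n1 n2 n3 d, d)" "u \<noteq> (x, 1, z)" using d yl by auto
            then show ?thesis using d by auto
          qed
        qed
      qed
      then have "W = Wz" unfolding W Wz_def left_eq right_eq by simp
      then show ?thesis using odd_ok by simp
    qed
  qed
qed

end
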